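(* Let $(\Lambda,d)$ be a finitely aligned $k$-graph and let $(\overline{\Lambda},\overline d)$ be its extension as described in the context. Suppose $v\in\Lambda^0$ and $E\subseteq v\Lambda$ is a finite exhaustive subset of $\Lambda$. Then $E$ is also a finite exhaustive subset of $\overline{\Lambda}$, i.e. for every $\mu\in v\overline{\Lambda}$ there is $\lambda\in E$ with $\overline{\Lambda}^{\min}(\lambda,\mu)\neq\emptyset$.
   Context: A $k$-graph $(\Lambda,d)$ is a countable category with a degree functor $d:\Lambda\to\mathbb{N}^k$ satisfying unique factorization; $\Lambda^0$ vertices, $r,s$ range/source, $v\Gamma=\{\lambda\in\Gamma:r(\lambda)=v\}$, $v\Lambda^n=\{\lambda:r(\lambda)=v,d(\lambda)=n\}$; $e_i$ standard basis, $\le$ coordinatewise, $\vee,\wedge$ coordinatewise max/min. For a $k$-graph $\Gamma$, $\Gamma^{\min}(\lambda,\mu)=\{(\alpha,\beta):\lambda\alpha=\mu\beta,\ d(\lambda\alpha)=d(\lambda)\vee d(\mu)\}$; $\Gamma$ is finitely aligned if these are finite; $E\subseteq v\Gamma$ is exhaustive (in $\Gamma$) if for every $\mu\in v\Gamma$ there is $\lambda\in E$ with $\Gamma^{\min}(\lambda,\mu)\neq\emptyset$. For $m\in(\mathbb{N}\cup\{\infty\})^k$, $\Omega_{k,m}$ has objects $\{p\in\mathbb{N}^k:p\le m\}$, morphisms $(p,q)$, $p\le q\le m$, $r(p,q)=p$, $s(p,q)=q$, $d(p,q)=q-p$. A graph morphism $x:\Omega_{k,m}\to\Lambda$ is a degree-preserving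 functor; $d(x)=m$, $x(a,b)=x((a,b))$, $x(a)=x(a,a)$. It is a boundary path if there is $n_x\in\mathbb{N}^k$, $n_x\le d(x)$, with $x(p)\Lambda^{e_i}=\emptyset$ whenever $p\in\mathbb{N}^k$, $n_x\le p\le d(x)$, $p_i=d(x)_i$; $\Lambda^{\le\infty}$ is the set of boundary paths. $\sigma^px(a,b)=x(a+p,b+p)$; $\lambda x$ is the concatenation of $\lambda$ and $x$. $V_\Lambda=\{(x;m):x\in\Lambda^{\le\infty},m\in\mathbb{N}^k,m\not\le d(x)\}$, $(x;m)\approx(y;p)$ iff $x(m\wedge d(x))=y(p\wedge d(y))$ and $m-m\wedge d(x)=p-p\wedge d(y)$; classes $[x;m]$ form $\widetilde{V_\Lambda}$. $P_\Lambda=\{(x;(m,n)):x\in\Lambda^{\le\infty},m\le n\in\mathbb{N}^k,n\not\le d(x)\}$, $(x;(m,n))\sim(y;(p,q))$ iff $x(m\wedge d(x),n\wedge d(x))=y(p\wedge d(y),q\wedge d(y))$, $m-m\wedge d(x)=p-p\wedge d(y)$, $n-m=q-p$; classes $[x;(m,n)]$ form $\widetilde{P_\Lambda}$. The extension $\overline{\Lambda}$ is the $k$-graph with objects $\Lambda^0\sqcup\widetilde{V_\Lambda}$ and morphisms $\Lambda\sqcup\widetilde{P_\Lambda}$: on $\Lambda$ everything is as in $\Lambda$; $\overline r([x;(m,n)])=x(m)$ if $m\le d(x)$, else $[x;m]$; $\overline s([x;(m,n)])=[x;n]$; identity at $[x;m]$ is $[x;(m,m)]$; $\lambda[x;(m,n)]=[\lambda\sigma^mx;(0,d(\lambda)+n-m)]$;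 $[x;(m,n)][y;(p,q)]=[z;(m,n+q-p)]$ with $z=x(0,n\wedge d(x))\sigma^{p\wedge d(y)}y$; degree $\overline d|_\Lambda=d$, $\overline d([x;(m,n)])=n-m$. *)

theory Defs
  imports Main "HOL-Library.Extended_Nat" "HOL-Library.Function_Algebras"
begin

text \<open>Degrees in N^k are functions nat => nat vanishing outside {..<k}; order, sup, inf,
  plus and (truncated) minus are pointwise.  A k-graph is encoded by its set of morphisms;
  objects (vertices) are identified with the identity morphisms, i.e. the degree-0 morphisms.\<close>

record 'a cat_data =
  Mor :: "'a set"
  rg  :: "'a \<Rightarrow> 'a"
  sr  :: "'a \<Rightarrow> 'a"
  dg  :: "'a \<Rightarrow> nat \<Rightarrow> nat"
  cmp :: "'a \<Rightarrow> 'a \<Rightarrow> 'a"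

definition degs :: "nat \<Rightarrow> (nat \<Rightarrow> nat) set" where
  "degs k = {n. \<forall>i. k \<le> i \<longrightarrow> n i = 0}"

definition ebasis :: "nat \<Rightarrow> nat \<Rightarrow> nat" where
  "ebasis i = (\<lambda>j. if j = i then 1 else 0)"

definition verts :: "'a cat_data \<Rightarrow> 'a set" where
  "verts G = {v \<in> Mor G. dg G v = 0}"

definition is_kgraph :: "nat \<Rightarrow> 'a cat_data \<Rightarrow> bool" where
  "is_kgraph k G \<longleftrightarrow>
     countable (Mor G) \<and>
     (\<forall>l \<in> Mor G. dg G l \<in> degs k \<and> rg G l \<in> verts G \<and> sr G l \<in> verts G) \<and>
     (\<forall>v \<in> verts G. rg G v = v \<and> sr G v = v) \<and>
     (\<forall>l \<in> Mor G. cmp G (rg G l) l = l \<and> cmp G l (sr G l) = l) \<and>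
     (\<forall>l \<in> Mor G. \<forall>m \<in> Mor G. sr G l = rg G m \<longrightarrow>
        cmp G l m \<in> Mor G \<and> rg G (cmp G l m) = rg G l \<and> sr G (cmp G l m) = sr G m \<and>
        dg G (cmp G l m) = dg G l + dg G m) \<and>
     (\<forall>l \<in> Mor G. \<forall>m \<in> Mor G. \<forall>n \<in> Mor G. sr G l = rg G m \<longrightarrow> sr G m = rg G n \<longrightarrow>
        cmp G (cmp G l m) n = cmp G l (cmp G m n)) \<and>
     (\<forall>l \<in> Mor G. \<forall>m \<in> degs k. \<forall>n \<in> degs k. dg G l = m + n \<longrightarrow>
        (\<exists>!(a, b). a \<in> Mor G \<and> b \<in> Mor G \<and> sr G a = rg G b \<and>
                  dg G a = m \<and> dg G b = n \<and> cmp G a b = l))"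

definition minext :: "'a cat_data \<Rightarrow> 'a \<Rightarrow> 'a \<Rightarrow> ('a \<times> 'a) set" where
  "minext G l m = {(a, b). a \<in> Mor G \<and> b \<in> Mor G \<and> sr G l = rg G a \<and> sr G m = rg G b \<and>
       cmp G l a = cmp G m b \<and> dg G (cmp G l a) = sup (dg G l) (dg G m)}"

definition finitely_aligned :: "'a cat_data \<Rightarrow> bool" where
  "finitely_aligned G \<longleftrightarrow> (\<forall>l \<in> Mor G. \<forall>m \<in> Mor G. finite (minext G l m))"

definition exhaustive :: "'a cat_data \<Rightarrow> 'a \<Rightarrow> 'a set \<Rightarrow> bool" where
  "exhaustive G v E \<longleftrightarrow> (\<forall>m \<in> Mor G. rg G m = v \<longrightarrow> (\<exists>l \<in> E. minext G l m \<noteq> {}))"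

definition seg :: "'a cat_data \<Rightarrow> 'a \<Rightarrow> (nat \<Rightarrow> nat) \<Rightarrow> (nat \<Rightarrow> nat) \<Rightarrow> 'a" where
  "seg G l p q = (THE n. \<exists>a b. a \<in> Mor G \<and> n \<in> Mor G \<and> b \<in> Mor G \<and>
      sr G a = rg G n \<and> sr G n = rg G b \<and> dg G a = p \<and> dg G n = q - p \<and>
      dg G b = dg G l - q \<and> cmp G (cmp G a n) b = l)"

text \<open>Graph morphisms x : Omega_{k,m} -> Lambda, represented by their degree m :: nat => enat
  and their values on pairs (p,q) with p <= q <= m (values elsewhere are irrelevant).\<close>
type_synonym 'a kpath = "(nat \<Rightarrow> enat) \<times> ((nat \<Rightarrow> nat) \<times> (nat \<Rightarrow> nat) \<Rightarrow> 'a)"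

definition ed :: "(nat \<Rightarrow> nat) \<Rightarrow> nat \<Rightarrow> enat" where
  "ed m = (\<lambda>i. enat (m i))"

definition dmin :: "(nat \<Rightarrow> nat) \<Rightarrow> (nat \<Rightarrow> enat) \<Rightarrow> nat \<Rightarrow> nat" where
  "dmin m dx = (\<lambda>i. if enat (m i) \<le> dx i then m i else the_enat (dx i))"

definition graph_morphism :: "nat \<Rightarrow> 'a cat_data \<Rightarrow> 'a kpath \<Rightarrow> bool" where
  "graph_morphism k G x \<longleftrightarrow>
     (\<forall>i. k \<le> i \<longrightarrow> fst x i = 0) \<and>
     (\<forall>p \<in> degs k. \<forall>q \<in> degs k. p \<le> q \<longrightarrow> ed q \<le> fst x \<longrightarrow>
        snd x (p, q) \<in> Mor G \<and> dg G (snd x (p, q)) = q - p \<and>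
        rg G (snd x (p, q)) = snd x (p, p) \<and> sr G (snd x (p, q)) = snd x (q, q)) \<and>
     (\<forall>p \<in> degs k. \<forall>q \<in> degs k. \<forall>t \<in> degs k. p \<le> q \<longrightarrow> q \<le> t \<longrightarrow> ed t \<le> fst x \<longrightarrow>
        cmp G (snd x (p, q)) (snd x (q, t)) = snd x (p, t))"

definition boundary_path :: "nat \<Rightarrow> 'a cat_data \<Rightarrow> 'a kpath \<Rightarrow> bool" where
  "boundary_path k G x \<longleftrightarrow> graph_morphism k G x \<and>
     (\<exists>nx \<in> degs k. ed nx \<le> fst x \<and>
        (\<forall>p \<in> degs k. nx \<le> p \<longrightarrow> ed p \<le> fst x \<longrightarrow>
          (\<forall>i < k. enat (p i) = fst x i \<longrightarrow>
             \<not> (\<exists>l \<in> Mor G. rg G l = snd x (p, p) \<and> dg G l = ebasis i))))"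

definition shift :: "(nat \<Rightarrow> nat) \<Rightarrow> 'a kpath \<Rightarrow> 'a kpath" where
  "shift p x = ((\<lambda>i. fst x i - enat (p i)), (\<lambda>(a, b). snd x (a + p, b + p)))"

definition concat :: "'a cat_data \<Rightarrow> 'a \<Rightarrow> 'a kpath \<Rightarrow> 'a kpath" where
  "concat G l x = ((\<lambda>i. enat (dg G l i) + fst x i),
     (\<lambda>(a, b). seg G (cmp G l (snd x (0, sup b (dg G l) - dg G l))) a b))"

type_synonym 'a prep = "'a kpath \<times> ((nat \<Rightarrow> nat) \<times> (nat \<Rightarrow> nat))"

definition Preps :: "nat \<Rightarrow> 'a cat_data \<Rightarrow> 'a prep set" where
  "Preps k G = {(x, (m, n)). boundary_path k G x \<and> m \<in> degs k \<and> n \<in> degs k \<and> m \<le> n \<and>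
                   \<not> ed n \<le> fst x}"

definition peq :: "'a prep \<Rightarrow> 'a prep \<Rightarrow> bool" where
  "peq a b = (case a of (x, (m, n)) \<Rightarrow> case b of (y, (p, q)) \<Rightarrow>
      snd x (dmin m (fst x), dmin n (fst x)) = snd y (dmin p (fst y), dmin q (fst y)) \<and>
      m - dmin m (fst x) = p - dmin p (fst y) \<and> n - m = q - p)"

definition pcls :: "nat \<Rightarrow> 'a cat_data \<Rightarrow> 'a prep \<Rightarrow> 'a prep set" where
  "pcls k G a = {b \<in> Preps k G. peq b a}"

definition Ptilde :: "nat \<Rightarrow> 'a cat_data \<Rightarrow> 'a prep set set" where
  "Ptilde k G = pcls k G ` Preps k G"

definition rep :: "'a prep set \<Rightarrow> 'a prep" where
  "rep C = (SOME a. a \<in> C)"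

text \<open>Morphisms: Inl lambda for lambda in Lambda, Inr [x;(m,n)]
  for classes in P~; the vertex [x;m] is the identity [x;(m,m)].  Composition of the form
  [x;(m,n)] lambda is never defined (sources of P~ are never in Lambda^0).\<close>
definition ext :: "nat \<Rightarrow> 'a cat_data \<Rightarrow> ('a + 'a prep set) cat_data" where
  "ext k G = \<lparr>
     Mor = Inl ` Mor G \<union> Inr ` Ptilde k G,
     rg = (\<lambda>u. case u of Inl l \<Rightarrow> Inl (rg G l)
              | Inr C \<Rightarrow> (case rep C of (x, (m, n)) \<Rightarrow>
                   if ed m \<le> fst x then Inl (snd x (m, m)) else Inr (pcls k G (x, (m, m))))),
     sr = (\<lambda>u. case u of Inl l \<Rightarrow> Inl (sr G l)
              | Inr C \<Rightarrow> (case rep C of (x, (m, n)) \<Rightarrow> Inr (pcls k G (x, (n, n))))),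
     dg = (\<lambda>u. case u of Inl l \<Rightarrow> dg G l
              | Inr C \<Rightarrow> (case rep C of (x, (m, n)) \<Rightarrow> n - m)),
     cmp = (\<lambda>u w. case u of
              Inl l \<Rightarrow> (case w of Inl l' \<Rightarrow> Inl (cmp G l l')
                 | Inr D \<Rightarrow> (case rep D of (x, (m, n)) \<Rightarrow>
                     Inr (pcls k G (concat G l (shift m x), (0, dg G l + n - m)))))
            | Inr C \<Rightarrow> (case w of Inl l' \<Rightarrow> undefined
                 | Inr D \<Rightarrow> (case rep C of (x, (m, n)) \<Rightarrow> case rep D of (y, (p, q)) \<Rightarrow>
                     Inr (pcls k G (concat G (snd x (0, dmin n (fst x))) (shift (dmin p (fst y)) y),
                                    (m, n + q - p))))))
   \<rparr>"

end

theory Submission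
  imports Defs
begin


lemma degs_add: "a \<in> degs k \<Longrightarrow> b \<in> degs k \<Longrightarrow> a + b \<in> degs k"
  by (simp add: degs_def)
lemma degs_diff: "a \<in> degs k \<Longrightarrow> a - b \<in> degs k"
  by (simp add: degs_def)
lemma degs_sup: "a \<in> degs k \<Longrightarrow> b \<in> degs k \<Longrightarrow> sup a b \<in> degs k"
  by (simp add: degs_def)
lemma degs_zero: "0 \<in> degs k"
  by (simp add: degs_def)
lemma degs_dmin: "a \<in> degs k \<Longrightarrow> dmin a f \<in> degs k"
  by (simp add: degs_def dmin_def zero_enat_def[symmetric])
lemma degs_ebasis: "i < k \<Longrightarrow> ebasis i \<in> degs k"
  by (simp add: degs_def ebasis_def)

lemma dmin_le: "dmin a f \<le> a"
  unfolding dmin_def le_fun_def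
proof
  fix i show "(if enat (a i) \<le> f i then a i else the_enat (f i)) \<le> a i"
    by (cases "f i") auto
qed

lemma ed_dmin: "ed (dmin a f) \<le> f"
  unfolding dmin_def le_fun_def ed_def
proof
  fix i show "enat (if enat (a i) \<le> f i then a i else the_enat (f i)) \<le> f i"
    by (cases "f i") auto
qed

lemma dmin_id: "ed a \<le> f \<Longrightarrow> dmin a f = a"
  by (auto simp: dmin_def le_fun_def ed_def)

lemma dmin_mono: "a \<le> b \<Longrightarrow> dmin a f \<le> dmin b f"
  unfolding dmin_def le_fun_def
proof
  fix i assume "\<forall>x. a x \<le> b x"
  then have "a i \<le> b i" by simp
  then show "(if enat (a i) \<le> f i then a i else the_enat (f i)) \<le> (if enat (b i) \<le> f i then b i else the_enat (f i))"
    by (cases "f i") auto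
qed

lemma dmin_zero_iff: "a - dmin a f = 0 \<longleftrightarrow> ed a \<le> f"
proof
  assume h: "a - dmin a f = 0"
  show "ed a \<le> f" unfolding le_fun_def ed_def
  proof
    fix i
    from h have "a i - dmin a f i = 0" by (metis minus_apply zero_fun_def)
    then show "enat (a i) \<le> f i"
      by (cases "f i") (auto simp: dmin_def split: if_splits)
  qed
next
  assume "ed a \<le> f" then show "a - dmin a f = 0" by (simp add: dmin_id)
qed

lemma le_dmin: "a \<le> b \<Longrightarrow> ed a \<le> f \<Longrightarrow> a \<le> dmin b f"
  by (metis dmin_id dmin_mono)

lemma le_ed_trans: "a \<le> b \<Longrightarrow> ed b \<le> f \<Longrightarrow> ed a \<le> f"
  unfolding le_fun_def ed_def by (meson enat_ord_simps(1) order_trans)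

lemma dmin_concat:
  assumes "ed P \<le> f" "P \<le> q"
  shows "dmin (d + (q - P)) (\<lambda>i. enat (d i) + (f i - enat (P i))) = d + (dmin q f - P)"
proof
  fix i
  from assms have a: "enat (P i) \<le> f i" "P i \<le> q i" by (auto simp: le_fun_def ed_def)
  show "dmin (d + (q - P)) (\<lambda>i. enat (d i) + (f i - enat (P i))) i = (d + (dmin q f - P)) i"
    using a by (cases "f i") (auto simp: dmin_def)
qed



locale kgr = fixes k :: nat and G :: "'a cat_data" assumes KG: "is_kgraph k G"
begin

lemma dg_degs: "l \<in> Mor G \<Longrightarrow> dg G l \<in> degs k"
  using KG by (simp add: is_kgraph_def)
lemma rg_verts: "l \<in> Mor G \<Longrightarrow> rg G l \<in> verts G"
  using KG by (simp add: is_kgraph_def)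
lemma sr_verts: "l \<in> Mor G \<Longrightarrow> sr G l \<in> verts G"
  using KG by (simp add: is_kgraph_def)
lemma verts_mor: "v \<in> verts G \<Longrightarrow> v \<in> Mor G"
  by (simp add: verts_def)
lemma verts_dg: "v \<in> verts G \<Longrightarrow> dg G v = 0"
  by (simp add: verts_def)
lemma vert_rg: "v \<in> verts G \<Longrightarrow> rg G v = v"
  using KG by (simp add: is_kgraph_def)
lemma vert_sr: "v \<in> verts G \<Longrightarrow> sr G v = v"
  using KG by (simp add: is_kgraph_def)
lemma id_l: "l \<in> Mor G \<Longrightarrow> cmp G (rg G l) l = l"
  using KG by (simp add: is_kgraph_def)
lemma id_r: "l \<in> Mor G \<Longrightarrow> cmp G l (sr G l) = l"
  using KG by (simp add: is_kgraph_def)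
lemma cmp_props: "l \<in> Mor G \<Longrightarrow> m \<in> Mor G \<Longrightarrow> sr G l = rg G m \<Longrightarrow>
    cmp G l m \<in> Mor G \<and> rg G (cmp G l m) = rg G l \<and> sr G (cmp G l m) = sr G m \<and>
    dg G (cmp G l m) = dg G l + dg G m"
  using KG unfolding is_kgraph_def by blast
lemma assoc: "l \<in> Mor G \<Longrightarrow> m \<in> Mor G \<Longrightarrow> n \<in> Mor G \<Longrightarrow> sr G l = rg G m \<Longrightarrow> sr G m = rg G n \<Longrightarrow>
        cmp G (cmp G l m) n = cmp G l (cmp G m n)"
  using KG unfolding is_kgraph_def by blast
lemma fact_ex1: "l \<in> Mor G \<Longrightarrow> m \<in> degs k \<Longrightarrow> n \<in> degs k \<Longrightarrow> dg G l = m + n \<Longrightarrow>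
        (\<exists>!(a, b). a \<in> Mor G \<and> b \<in> Mor G \<and> sr G a = rg G b \<and>
                  dg G a = m \<and> dg G b = n \<and> cmp G a b = l)"
  using KG unfolding is_kgraph_def by blast

lemma fact_ex:
  assumes "l \<in> Mor G" "m \<in> degs k" "n \<in> degs k" "dg G l = m + n"
  obtains a b where "a \<in> Mor G" "b \<in> Mor G" "sr G a = rg G b" "dg G a = m" "dg G b = n" "cmp G a b = l"
  using fact_ex1[OF assms] by auto

lemma fact_uniq:
  assumes "l \<in> Mor G" "m \<in> degs k" "n \<in> degs k" "dg G l = m + n"
    "a \<in> Mor G" "b \<in> Mor G" "sr G a = rg G b" "dg G a = m" "dg G b = n" "cmp G a b = l"
    "a' \<in> Mor G" "b' \<in> Mor G" "sr G a' = rg G b'" "dg G a' = m" "dg G b' = n" "cmp G a' b' = l"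
  shows "a = a' \<and> b = b'"
proof -
  define PP where "PP = (\<lambda>(a, b). a \<in> Mor G \<and> b \<in> Mor G \<and> sr G a = rg G b \<and>
                  dg G a = m \<and> dg G b = n \<and> cmp G a b = l)"
  have "\<exists>!p. PP p" unfolding PP_def by (rule fact_ex1[OF assms(1-4)])
  then obtain p where p: "\<And>y. PP y \<Longrightarrow> y = p" by (meson ex1E)
  have "PP (a, b)" unfolding PP_def using assms(5-10) by simp
  moreover have "PP (a', b')" unfolding PP_def using assms(11-16) by simp
  ultimately have "(a, b) = (a', b')" using p by metis
  then show ?thesis by simp
qed

lemma seg_char:
  assumes l: "l = cmp G (cmp G a n) b" and mor: "a \<in> Mor G" "n \<in> Mor G" "b \<in> Mor G"
    and e: "sr G a = rg G n" "sr G n = rg G b"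
    and d: "dg G a = p" "dg G n = q - p" "dg G b = dg G l - q"
    and pq: "p \<le> q" "q \<le> dg G l" "p \<in> degs k" "q \<in> degs k"
  shows "seg G l p q = n"
  unfolding seg_def
proof (rule the_equality)
  show "\<exists>a' b'. a' \<in> Mor G \<and> n \<in> Mor G \<and> b' \<in> Mor G \<and> sr G a' = rg G n \<and> sr G n = rg G b' \<and>
     dg G a' = p \<and> dg G n = q - p \<and> dg G b' = dg G l - q \<and> cmp G (cmp G a' n) b' = l"
    using assms by blast
next
  fix n' assume "\<exists>a' b'. a' \<in> Mor G \<and> n' \<in> Mor G \<and> b' \<in> Mor G \<and> sr G a' = rg G n' \<and> sr G n' = rg G b' \<and>
     dg G a' = p \<and> dg G n' = q - p \<and> dg G b' = dg G l - q \<and> cmp G (cmp G a' n') b' = l"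
  then obtain a' b' where h: "a' \<in> Mor G" "n' \<in> Mor G" "b' \<in> Mor G" "sr G a' = rg G n'" "sr G n' = rg G b'"
     "dg G a' = p" "dg G n' = q - p" "dg G b' = dg G l - q" "cmp G (cmp G a' n') b' = l" by blast
  have u: "cmp G a n \<in> Mor G" "sr G (cmp G a n) = sr G n" "dg G (cmp G a n) = p + (q - p)"
    using cmp_props[OF mor(1,2) e(1)] d by auto
  have u': "cmp G a' n' \<in> Mor G" "sr G (cmp G a' n') = sr G n'" "dg G (cmp G a' n') = p + (q - p)"
    using cmp_props[OF h(1,2,4)] h by auto
  have qq: "p + (q - p) = q" using pq(1) by (simp add: le_fun_def fun_eq_iff)
  have lm: "l \<in> Mor G" using cmp_props[OF u(1) mor(3)] e u l by auto
  have dl: "dg G l = q + (dg G l - q)" using pq(2) by (simp add: le_fun_def fun_eq_iff)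
  have "cmp G a n = cmp G a' n' \<and> b = b'"
    apply (rule fact_uniq[OF lm pq(4) degs_diff[OF dg_degs[OF lm]] dl])
    using u u' qq h mor e d l by simp_all
  then have "a = a' \<and> n = n'"
    apply -
    apply (rule fact_uniq[of "cmp G a n" p "q - p" a n a' n'])
    using u qq pq degs_diff mor h e d by simp_all
  then show "n' = n" by simp
qed

lemma seg_whole: "l \<in> Mor G \<Longrightarrow> seg G l 0 (dg G l) = l"
  apply (rule seg_char[of l "rg G l" l "sr G l"])
  using id_l id_r rg_verts sr_verts verts_mor verts_dg vert_rg vert_sr dg_degs degs_zero
  by (simp_all add: le_fun_def)

end

lemma gm_mor:
  assumes "graph_morphism k G x" "p \<in> degs k" "q \<in> degs k" "p \<le> q" "ed q \<le> fst x"
  shows "snd x (p, q) \<in> Mor G" "dg G (snd x (p, q)) = q - p"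
        "rg G (snd x (p, q)) = snd x (p, p)" "sr G (snd x (p, q)) = snd x (q, q)"
  using assms unfolding graph_morphism_def by blast+

lemma gm_cmp:
  assumes "graph_morphism k G x" "p \<in> degs k" "q \<in> degs k" "t \<in> degs k" "p \<le> q" "q \<le> t" "ed t \<le> fst x"
  shows "cmp G (snd x (p, q)) (snd x (q, t)) = snd x (p, t)"
  using assms unfolding graph_morphism_def by blast

context kgr begin

lemma gm_seg:
  assumes x: "graph_morphism k G x" and deg: "a \<in> degs k" "b \<in> degs k" "t \<in> degs k"
    and le: "a \<le> b" "b \<le> t" "ed t \<le> fst x"
  shows "seg G (snd x (0, t)) a b = snd x (a, b)"
proof -
  have z: "(0::nat\<Rightarrow>nat) \<le> a" by (simp add: le_fun_def)
  have eb: "ed b \<le> fst x" using le le_ed_trans by blast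
  have ea: "ed a \<le> fst x" using le le_ed_trans by blast
  note m1 = gm_mor[OF x degs_zero deg(1) z ea]
  note m2 = gm_mor[OF x deg(1) deg(2) le(1) eb]
  note m3 = gm_mor[OF x deg(2) deg(3) le(2) le(3)]
  have c1: "cmp G (snd x (0, a)) (snd x (a, b)) = snd x (0, b)"
    using gm_cmp[OF x degs_zero deg(1) deg(2) z le(1) eb] .
  have c2: "cmp G (snd x (0, b)) (snd x (b, t)) = snd x (0, t)"
    using gm_cmp[OF x degs_zero deg(2) deg(3) _ le(2) le(3)] by (simp add: le_fun_def)
  have zt: "(0::nat\<Rightarrow>nat) \<le> t" by (simp add: le_fun_def)
  have dt: "dg G (snd x (0, t)) = t" using gm_mor(2)[OF x degs_zero deg(3) zt le(3)] by simp
  show ?thesis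
    apply (rule seg_char[of _ "snd x (0, a)" _ "snd x (b, t)"])
    using c1 c2 m1 m2 m3 dt deg le by simp_all
qed

end

lemma concat_fst: "fst (concat G l (shift P z)) = (\<lambda>i. enat (dg G l i) + (fst z i - enat (P i)))"
  by (simp add: concat_def shift_def)

lemma concat_snd:
  assumes "P \<le> Q" "dg G l \<le> L" "L - dg G l = Q - P"
  shows "snd (concat G l (shift P z)) (a, L) = seg G (cmp G l (snd z (P, Q))) a L"
proof -
  have "sup L (dg G l) = L" using assms(2) by (simp add: sup.absorb1)
  moreover have "Q - P + P = Q" using assms(1) by (simp add: le_fun_def fun_eq_iff)
  ultimately show ?thesis using assms(3) by (simp add: concat_def shift_def)
qed



context kgr begin

lemma prefix_in_E:
  assumes bp: "boundary_path k G x" and md: "m \<in> degs k" and me: "ed m \<le> fst x"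
    and xv: "snd x (m, m) = v" and vv: "v \<in> verts G"
    and Es: "E \<subseteq> {l \<in> Mor G. rg G l = v}" and fin: "finite E" and ex: "exhaustive G v E"
  shows "\<exists>l\<in>E. ed (m + dg G l) \<le> fst x \<and> snd x (m, m + dg G l) = l"
proof -
  have gm: "graph_morphism k G x" using bp by (simp add: boundary_path_def)
  obtain nx where nx: "nx \<in> degs k" "ed nx \<le> fst x"
     "\<And>p i. p \<in> degs k \<Longrightarrow> nx \<le> p \<Longrightarrow> ed p \<le> fst x \<Longrightarrow> i < k \<Longrightarrow> enat (p i) = fst x i \<Longrightarrow>
          \<not> (\<exists>l \<in> Mor G. rg G l = snd x (p, p) \<and> dg G l = ebasis i)"
    using bp unfolding boundary_path_def by blast
  have Ene: "E \<noteq> {}"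
    using ex vv verts_mor vert_rg unfolding exhaustive_def by blast
  define M where "M = (\<lambda>i. Max ((\<lambda>l. dg G l i) ` E))"
  have leM: "\<And>l. l \<in> E \<Longrightarrow> dg G l \<le> M"
    unfolding M_def le_fun_def using fin by auto
  have Md: "M \<in> degs k"
  proof -
    have "\<And>i. k \<le> i \<Longrightarrow> (\<lambda>l. dg G l i) ` E = {0}"
      using Ene Es dg_degs unfolding degs_def by (auto simp: image_iff) (metis (no_types, lifting) ex_in_conv mem_Collect_eq subsetD)
    then show ?thesis unfolding degs_def M_def by auto
  qed
  define s where "s = sup (m + M) nx"
  define t where "t = dmin s (fst x)"
  have sd: "s \<in> degs k" unfolding s_def using degs_sup degs_add md Md nx(1) by blast
  have td: "t \<in> degs k" unfolding t_def using degs_dmin sd by blast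
  have te: "ed t \<le> fst x" unfolding t_def by (rule ed_dmin)
  have nxt: "nx \<le> t" unfolding t_def s_def by (rule le_dmin[OF _ nx(2)]) simp
  have mt: "m \<le> t" unfolding t_def s_def by (rule le_dmin[OF _ me]) (simp add: le_fun_def le_supI1)
  define \<mu> where "\<mu> = snd x (m, t)"
  note mu = gm_mor[OF gm md td mt te, folded \<mu>_def]
  have rmu: "rg G \<mu> = v" using mu xv by simp
  obtain l where lE: "l \<in> E" and mne: "minext G l \<mu> \<noteq> {}"
    using ex mu(1) rmu unfolding exhaustive_def by blast
  obtain \<alpha> \<beta> where ab: "\<alpha> \<in> Mor G" "\<beta> \<in> Mor G" "sr G l = rg G \<alpha>" "sr G \<mu> = rg G \<beta>"
       "cmp G l \<alpha> = cmp G \<mu> \<beta>" "dg G (cmp G l \<alpha>) = sup (dg G l) (dg G \<mu>)"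
    using mne unfolding minext_def by auto
  have lm: "l \<in> Mor G" "rg G l = v" using lE Es by auto
  note cl = cmp_props[OF lm(1) ab(1) ab(3)]
  note cm = cmp_props[OF mu(1) ab(2) ab(4)]
  have deq: "(t - m) + dg G \<beta> = sup (dg G l) (t - m)"
    using ab(5,6) cm mu(2) by simp
  have b0: "dg G \<beta> = 0"
  proof (rule ccontr)
    assume "dg G \<beta> \<noteq> 0"
    have "\<exists>i. dg G \<beta> i \<noteq> 0"
    proof (rule ccontr)
      assume "\<not> (\<exists>i. dg G \<beta> i \<noteq> 0)"
      then have "dg G \<beta> = 0" by (simp add: fun_eq_iff)
      then show False using \<open>dg G \<beta> \<noteq> 0\<close> by simp
    qed
    then obtain i where i: "dg G \<beta> i \<noteq> 0" by blast
    have "\<forall>j. k \<le> j \<longrightarrow> dg G \<beta> j = 0" using dg_degs[OF ab(2)] unfolding degs_def by simp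
    then have ik: "i < k" using i by (cases "i < k") auto
    have "(t i - m i) + dg G \<beta> i = max (dg G l i) (t i - m i)"
      using arg_cong[OF deq, of "\<lambda>f. f i"] by (simp add: sup_nat_def)
    then have lt: "t i - m i < dg G l i" using i by (simp add: max_def split: if_splits)
    have "dg G l i \<le> M i" using leM[OF lE] by (simp add: le_fun_def)
    then have "t i < m i + M i" using lt by linarith
    then have tis: "t i < s i" unfolding s_def by (simp add: sup_nat_def)
    have ns: "\<not> enat (s i) \<le> fst x i"
    proof
      assume h: "enat (s i) \<le> fst x i"
      then have "t i = s i" unfolding t_def dmin_def by simp
      with tis show False by simp
    qed
    then have "t i = the_enat (fst x i)" unfolding t_def dmin_def by simp
    then have fx: "enat (t i) = fst x i" using ns by (cases "fst x i") auto
    have bd: "dg G \<beta> = ebasis i + (dg G \<beta> - ebasis i)"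
    proof
      fix j show "dg G \<beta> j = (ebasis i + (dg G \<beta> - ebasis i)) j"
        using i by (cases "j = i") (simp_all add: ebasis_def)
    qed
    obtain e r where er: "e \<in> Mor G" "r \<in> Mor G" "sr G e = rg G r" "dg G e = ebasis i" "cmp G e r = \<beta>"
      using fact_ex[OF ab(2) degs_ebasis[OF ik] degs_diff[OF dg_degs[OF ab(2)]] bd] by blast
    have "rg G e = snd x (t, t)"
      using cmp_props[OF er(1,2,3)] er(5) ab(4) mu(4) by simp
    then show False using nx(3)[OF td nxt te ik fx] er by blast
  qed
  have bv: "\<beta> \<in> verts G" using ab(2) b0 by (simp add: verts_def)
  have "\<beta> = sr G \<mu>" using vert_rg[OF bv] ab(4) by simp
  then have lmu: "cmp G l \<alpha> = \<mu>" using ab(5) id_r[OF mu(1)] by simp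
  have dsum: "dg G l + dg G \<alpha> = t - m" using cl lmu mu(2) by simp
  have dsi: "\<And>i. dg G l i + dg G \<alpha> i = t i - m i" using dsum by (metis plus_fun_apply minus_apply)
  have mti: "\<And>i. m i \<le> t i" using mt by (simp add: le_fun_def)
  have lle: "m + dg G l \<le> t" unfolding le_fun_def
  proof
    fix i show "(m + dg G l) i \<le> t i" using dsi[of i] mti[of i] by simp
  qed
  have ld: "dg G l \<in> degs k" using dg_degs lm(1) by blast
  have mld: "m + dg G l \<in> degs k" using degs_add md ld by blast
  have mle: "m \<le> m + dg G l" by (simp add: le_fun_def)
  have mlx: "ed (m + dg G l) \<le> fst x" using le_ed_trans[OF lle te] .
  note p1 = gm_mor[OF gm md mld mle mlx]
  note p2 = gm_mor[OF gm mld td lle te]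
  have pc: "cmp G (snd x (m, m + dg G l)) (snd x (m + dg G l, t)) = \<mu>"
    unfolding \<mu>_def using gm_cmp[OF gm md mld td mle lle te] .
  have dmu: "dg G \<mu> = dg G l + (t - (m + dg G l))"
  proof
    fix i show "dg G \<mu> i = (dg G l + (t - (m + dg G l))) i" using dsi[of i] mti[of i] mu(2) by simp
  qed
  have ad: "dg G \<alpha> = t - (m + dg G l)"
  proof
    fix i show "dg G \<alpha> i = (t - (m + dg G l)) i" using dsi[of i] mti[of i] by simp
  qed
  have "snd x (m, m + dg G l) = l \<and> snd x (m + dg G l, t) = \<alpha>"
    apply (rule fact_uniq[OF mu(1) ld degs_diff[OF td] dmu])
    using p1 p2 pc ab cl lmu ad lm by simp_all
  then show ?thesis using lE mlx by blast
qed

end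


definition pinv :: "'a prep \<Rightarrow> 'a \<times> (nat \<Rightarrow> nat) \<times> (nat \<Rightarrow> nat)" where
  "pinv a = (case a of (x, (m, n)) \<Rightarrow> (snd x (dmin m (fst x), dmin n (fst x)), m - dmin m (fst x), n - m))"

lemma pinv_simp: "pinv (x, (m, n)) = (snd x (dmin m (fst x), dmin n (fst x)), m - dmin m (fst x), n - m)"
  by (simp add: pinv_def)

lemma peq_pinv: "peq a b = (pinv a = pinv b)"
  by (simp add: peq_def pinv_def split: prod.splits)

lemma pcls_eq: "pinv a = pinv b \<Longrightarrow> pcls k G a = pcls k G b"
  by (simp add: pcls_def peq_pinv)

lemma rep_pcls:
  assumes "a \<in> Preps k G"
  shows "rep (pcls k G a) \<in> Preps k G \<and> pinv (rep (pcls k G a)) = pinv a"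
proof -
  have "a \<in> pcls k G a" using assms by (simp add: pcls_def peq_pinv)
  then have "rep (pcls k G a) \<in> pcls k G a" unfolding rep_def by (rule someI)
  then show ?thesis by (simp add: pcls_def peq_pinv)
qed

lemma Ptilde_rep:
  assumes "C \<in> Ptilde k G"
  shows "rep C \<in> Preps k G \<and> C = pcls k G (rep C)"
proof -
  obtain a where a: "a \<in> Preps k G" "C = pcls k G a" using assms by (auto simp: Ptilde_def)
  then show ?thesis using rep_pcls[OF a(1)] pcls_eq[of "rep C" a k G] by simp
qed

lemma Preps_iff: "((x, (m, n)) \<in> Preps k G) = (boundary_path k G x \<and> m \<in> degs k \<and> n \<in> degs k \<and> m \<le> n \<and> \<not> ed n \<le> fst x)"
  by (simp add: Preps_def)

lemma ext_Mor: "Mor (ext k G) = Inl ` Mor G \<union> Inr ` Ptilde k G" by (simp add: ext_def)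
lemma ext_Inl: "rg (ext k G) (Inl l) = Inl (rg G l)" "sr (ext k G) (Inl l) = Inl (sr G l)"
   "dg (ext k G) (Inl l) = dg G l" "cmp (ext k G) (Inl l) (Inl l') = Inl (cmp G l l')"
  by (simp_all add: ext_def)
lemma ext_Inr: "rep C = (x, (m, n)) \<Longrightarrow>
    rg (ext k G) (Inr C) = (if ed m \<le> fst x then Inl (snd x (m, m)) else Inr (pcls k G (x, (m, m))))"
  "rep C = (x, (m, n)) \<Longrightarrow> sr (ext k G) (Inr C) = Inr (pcls k G (x, (n, n)))"
  "rep C = (x, (m, n)) \<Longrightarrow> dg (ext k G) (Inr C) = n - m"
  by (simp_all add: ext_def)
lemma ext_Inl_Inr: "rep D = (x, (m, n)) \<Longrightarrow>
   cmp (ext k G) (Inl l) (Inr D) = Inr (pcls k G (concat G l (shift m x), (0, dg G l + n - m)))"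
  by (simp add: ext_def)
lemma ext_Inr_Inr: "rep C = (x, (m, n)) \<Longrightarrow> rep D = (y, (p, q)) \<Longrightarrow>
   cmp (ext k G) (Inr C) (Inr D) = Inr (pcls k G (concat G (snd x (0, dmin n (fst x))) (shift (dmin p (fst y)) y), (m, n + q - p)))"
  by (simp add: ext_def)

lemma ed_zero: "ed 0 \<le> f" by (simp add: ed_def le_fun_def zero_enat_def[symmetric])



context kgr begin

lemma inr_case:
  assumes CP: "C \<in> Ptilde k G" and rgC: "rg (ext k G) (Inr C) = Inl v" and vv: "v \<in> verts G"
    and Es: "E \<subseteq> {l \<in> Mor G. rg G l = v}" and fin: "finite E" and ex: "exhaustive G v E"
  shows "\<exists>l\<in>E. minext (ext k G) (Inl l) (Inr C) \<noteq> {}"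
proof -
  obtain x m n where rC: "rep C = (x, (m, n))" by (cases "rep C") auto
  have Pr: "(x, (m, n)) \<in> Preps k G" and Ceq: "C = pcls k G (x, (m, n))"
    using Ptilde_rep[OF CP] rC by auto
  have bp: "boundary_path k G x" and md: "m \<in> degs k" and nd: "n \<in> degs k" and mn: "m \<le> n"
    and nx: "\<not> ed n \<le> fst x" using Pr by (auto simp: Preps_iff)
  have gm: "graph_morphism k G x" using bp by (simp add: boundary_path_def)
  have me: "ed m \<le> fst x" and xv: "snd x (m, m) = v"
    using rgC ext_Inr(1)[OF rC, of k G] by (auto split: if_splits)
  obtain l where lE: "l \<in> E" and lxe: "ed (m + dg G l) \<le> fst x" and lx: "snd x (m, m + dg G l) = l"
    using prefix_in_E[OF bp md me xv vv Es fin ex] by blast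
  have lm: "l \<in> Mor G" using lE Es by auto
  have ld: "dg G l \<in> degs k" using dg_degs[OF lm] .
  define N where "N = sup (dg G l) (n - m)"
  define T where "T = dmin (m + N) (fst x)"
  define dn where "dn = dmin n (fst x)"
  have Nd: "N \<in> degs k" unfolding N_def using degs_sup degs_diff ld nd by blast
  have mNd: "m + N \<in> degs k" using degs_add md Nd by blast
  have Td: "T \<in> degs k" unfolding T_def using degs_dmin mNd by blast
  have Te: "ed T \<le> fst x" unfolding T_def by (rule ed_dmin)
  have dnd: "dn \<in> degs k" unfolding dn_def using degs_dmin nd by blast
  have dne: "ed dn \<le> fst x" unfolding dn_def by (rule ed_dmin)
  have mld: "m + dg G l \<in> degs k" using degs_add md ld by blast
  have z0: "\<And>a::nat\<Rightarrow>nat. 0 \<le> a" by (simp add: le_fun_def)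
  have nmN: "n \<le> m + N" unfolding N_def le_fun_def by (auto simp: sup_nat_def max_def)
  have lN: "dg G l \<le> N" unfolding N_def by simp
  have mlmN: "m + dg G l \<le> m + N" using lN by (simp add: le_fun_def)
  have mlT: "m + dg G l \<le> T" unfolding T_def by (rule le_dmin[OF mlmN lxe])
  have mml: "m \<le> m + dg G l" by (simp add: le_fun_def)
  have mT: "m \<le> T" using mml mlT by (rule order_trans)
  have dnT: "dn \<le> T" unfolding dn_def T_def by (rule dmin_mono[OF nmN])
  have mdn: "m \<le> dn" unfolding dn_def by (rule le_dmin[OF mn me])
  have dnn: "dn \<le> n" unfolding dn_def by (rule dmin_le)
  have nmN': "\<not> ed (m + N) \<le> fst x" using nx le_ed_trans[OF nmN] by blast
  have dmm: "dmin m (fst x) = m" using dmin_id[OF me] .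
  have dml: "dmin (m + dg G l) (fst x) = m + dg G l" using dmin_id[OF lxe] .
  define Q0 where "Q0 = (x, (m, m + N))"
  have Q0P: "Q0 \<in> Preps k G" unfolding Q0_def Preps_iff using bp md mNd nmN' mn nmN by (auto intro: order_trans)
  have mNm: "m + N - m = N" by (simp add: fun_eq_iff)
  have pQ0: "pinv Q0 = (snd x (m, T), 0, N)"
    unfolding Q0_def pinv_simp T_def[symmetric] dmm mNm by simp
  define D where "D = pcls k G (x, (n, m + N))"
  define D' where "D' = pcls k G (x, (m + dg G l, m + N))"
  have PD: "(x, (n, m + N)) \<in> Preps k G" unfolding Preps_iff using bp nd mNd nmN nmN' by auto
  have PD': "(x, (m + dg G l, m + N)) \<in> Preps k G" unfolding Preps_iff using bp mld mNd mlmN nmN' by auto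
  have DP: "D \<in> Ptilde k G" unfolding D_def Ptilde_def using PD by blast
  have DP': "D' \<in> Ptilde k G" unfolding D'_def Ptilde_def using PD' by blast
  obtain y p q where rD: "rep D = (y, (p, q))" by (cases "rep D") auto
  obtain z m' n' where rD': "rep D' = (z, (m', n'))" by (cases "rep D'") auto
  have yP: "(y, (p, q)) \<in> Preps k G" and yinv: "pinv (y, (p, q)) = pinv (x, (n, m + N))"
    using rep_pcls[OF PD] rD unfolding D_def by auto
  have zP: "(z, (m', n')) \<in> Preps k G" and zinv: "pinv (z, (m', n')) = pinv (x, (m + dg G l, m + N))"
    using rep_pcls[OF PD'] rD' unfolding D'_def by auto
  define P where "P = dmin p (fst y)"
  define Q where "Q = dmin q (fst y)"
  have e1: "snd y (P, Q) = snd x (dn, T)" and e2: "p - P = n - dn" and e3: "q - p = m + N - n"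
    using yinv unfolding pinv_simp P_def Q_def dn_def T_def by auto
  define R where "R = dmin n' (fst z)"
  have f1': "snd z (dmin m' (fst z), R) = snd x (m + dg G l, T)" and f2: "m' - dmin m' (fst z) = 0"
    and f3: "n' - m' = m + N - (m + dg G l)"
    using zinv unfolding pinv_simp R_def T_def dml by auto
  have m'e: "ed m' \<le> fst z" using f2 dmin_zero_iff by blast
  have f1: "snd z (m', R) = snd x (m + dg G l, T)" using f1' dmin_id[OF m'e] by simp
  have bpy: "boundary_path k G y" and pd: "p \<in> degs k" and qd: "q \<in> degs k" and pq: "p \<le> q"
    using yP by (auto simp: Preps_iff)
  have py: "\<not> ed p \<le> fst y"
  proof
    assume "ed p \<le> fst y"
    then have "p - P = 0" unfolding P_def using dmin_zero_iff by blast
    then have "n - dmin n (fst x) = 0" using e2 dn_def by simp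
    then show False using nx dmin_zero_iff by blast
  qed
  have bpz: "boundary_path k G z" and m'd: "m' \<in> degs k" and n'd: "n' \<in> degs k" and mn': "m' \<le> n'"
    using zP by (auto simp: Preps_iff)
  have gmy: "graph_morphism k G y" using bpy by (simp add: boundary_path_def)
  have gmz: "graph_morphism k G z" using bpz by (simp add: boundary_path_def)
  have Pd: "P \<in> degs k" unfolding P_def using degs_dmin pd by blast
  have Qd: "Q \<in> degs k" unfolding Q_def using degs_dmin qd by blast
  have Pe: "ed P \<le> fst y" unfolding P_def by (rule ed_dmin)
  have Qe: "ed Q \<le> fst y" unfolding Q_def by (rule ed_dmin)
  have PQ: "P \<le> Q" unfolding P_def Q_def by (rule dmin_mono[OF pq])
  have Pp: "P \<le> p" unfolding P_def by (rule dmin_le)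
  have Pq: "P \<le> q" using Pp pq by (rule order_trans)
  have Rd: "R \<in> degs k" unfolding R_def using degs_dmin n'd by blast
  have Re: "ed R \<le> fst z" unfolding R_def by (rule ed_dmin)
  have m'R: "m' \<le> R" unfolding R_def by (rule le_dmin[OF mn' m'e])
  note yPQ = gm_mor[OF gmy Pd Qd PQ Qe]
  note xdnT = gm_mor[OF gm dnd Td dnT Te]
  note zmR = gm_mor[OF gmz m'd Rd m'R Re]
  note xlT = gm_mor[OF gm mld Td mlT Te]
  note xml = gm_mor[OF gm md mld mml lxe]
  note xmT = gm_mor[OF gm md Td mT Te]
  have QP: "Q - P = T - dn" using yPQ(2) xdnT(2) e1 by simp
  have Rm: "R - m' = T - (m + dg G l)" using zmR(2) xlT(2) f1 by simp
  define lz where "lz = snd x (0, dn)"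
  note x0dn = gm_mor[OF gm degs_zero dnd z0 dne, folded lz_def]
  define X1 where "X1 = concat G lz (shift P y)"
  have fX1: "fst X1 = (\<lambda>i. enat (dn i) + (fst y i - enat (P i)))"
    unfolding X1_def concat_fst x0dn(2) by simp
  have nqp: "n + q - p = dn + (q - P)"
  proof (rule ext)
    fix i
    have "p i - P i = n i - dn i" using arg_cong[OF e2, of "\<lambda>f. f i"] by simp
    moreover have "P i \<le> p i" "p i \<le> q i" "dn i \<le> n i" using Pp pq dnn by (auto simp: le_fun_def)
    ultimately show "(n + q - p) i = (dn + (q - P)) i" by simp
  qed
  have dnTe: "dn + (T - dn) = T" using dnT by (simp add: le_fun_def fun_eq_iff)
  have dX1: "dmin (n + q - p) (fst X1) = T"
    unfolding fX1 nqp dmin_concat[OF Pe Pq] Q_def[symmetric] QP dnTe ..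
  have TX1: "ed T \<le> fst X1" using ed_dmin[of "n + q - p" "fst X1"] dX1 by simp
  have dmX1: "dmin m (fst X1) = m" using dmin_id le_ed_trans[OF mT TX1] by blast
  have sX1: "snd X1 (m, T) = snd x (m, T)"
  proof -
    have "snd X1 (m, T) = seg G (cmp G lz (snd y (P, Q))) m T"
      unfolding X1_def by (rule concat_snd) (use PQ dnT QP x0dn in simp_all)
    also have "cmp G lz (snd y (P, Q)) = snd x (0, T)"
      unfolding e1 lz_def using gm_cmp[OF gm degs_zero dnd Td z0 dnT Te] .
    also have "seg G (snd x (0, T)) m T = snd x (m, T)"
      using gm_seg[OF gm md Td Td mT order_refl Te] .
    finally show ?thesis .
  qed
  have nqpm: "n + q - p - m = N"
  proof (rule ext)
    fix i
    have "q i - p i = m i + N i - n i" using arg_cong[OF e3, of "\<lambda>f. f i"] by simp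
    moreover have "p i \<le> q i" "n i \<le> m i + N i" using pq nmN by (auto simp: le_fun_def)
    ultimately show "(n + q - p - m) i = N i" by simp
  qed
  define Q1 where "Q1 = (X1, (m, n + q - p))"
  have pQ1: "pinv Q1 = pinv Q0"
    unfolding Q1_def pinv_simp pQ0 dX1 dmX1 sX1 nqpm by simp
  define X2 where "X2 = concat G l (shift m' z)"
  have fX2: "fst X2 = (\<lambda>i. enat (dg G l i) + (fst z i - enat (m' i)))"
    unfolding X2_def concat_fst by simp
  have lnm: "dg G l + n' - m' = dg G l + (n' - m')"
    using mn' by (simp add: le_fun_def fun_eq_iff)
  have lTm: "dg G l + (T - (m + dg G l)) = T - m"
    using mlT by (simp add: le_fun_def fun_eq_iff)
  have dX2: "dmin (dg G l + n' - m') (fst X2) = T - m"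
    unfolding fX2 lnm dmin_concat[OF m'e mn'] R_def[symmetric] Rm lTm ..
  have dX20: "dmin 0 (fst X2) = 0" by (rule dmin_id[OF ed_zero])
  have sX2: "snd X2 (0, T - m) = snd x (m, T)"
  proof -
    have lTm': "dg G l \<le> T - m" unfolding le_fun_def
    proof
      fix i have "m i + dg G l i \<le> T i" using mlT by (simp add: le_fun_def)
      then show "dg G l i \<le> (T - m) i" by simp
    qed
    have "snd X2 (0, T - m) = seg G (cmp G l (snd z (m', R))) 0 (T - m)"
      unfolding X2_def
    proof (rule concat_snd)
      show "T - m - dg G l = R - m'" unfolding Rm
      proof (rule ext)
        fix i show "(T - m - dg G l) i = (T - (m + dg G l)) i" by simp
      qed
    qed (use m'R lTm' in simp_all)
    also have "cmp G l (snd z (m', R)) = snd x (m, T)"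
      using gm_cmp[OF gm md mld Td mml mlT Te] f1 lx by simp
    also have "seg G (snd x (m, T)) 0 (T - m) = snd x (m, T)"
      using seg_whole[OF xmT(1)] xmT(2) by simp
    finally show ?thesis .
  qed
  have lnmN: "dg G l + n' - m' = N"
    unfolding lnm f3 using lN by (simp add: le_fun_def fun_eq_iff)
  define Q2 where "Q2 = (X2, (0::nat\<Rightarrow>nat, dg G l + n' - m'))"
  have pQ2: "pinv Q2 = pinv Q0"
    unfolding Q2_def pinv_simp pQ0 dX20 dX2 sX2 using lnmN by simp
  have c1: "cmp (ext k G) (Inr C) (Inr D) = Inr (pcls k G Q0)"
    unfolding ext_Inr_Inr[OF rC rD] dn_def[symmetric] P_def[symmetric] lz_def[symmetric] X1_def[symmetric]
      Q1_def[symmetric] using pcls_eq[OF pQ1] by simp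
  have c2: "cmp (ext k G) (Inl l) (Inr D') = Inr (pcls k G Q0)"
    unfolding ext_Inl_Inr[OF rD'] X2_def[symmetric] Q2_def[symmetric] using pcls_eq[OF pQ2] by simp
  obtain w a b where rQ0: "rep (pcls k G Q0) = (w, (a, b))" by (cases "rep (pcls k G Q0)") auto
  have "pinv (w, (a, b)) = pinv Q0" using rep_pcls[OF Q0P] rQ0 by simp
  then have "b - a = N" unfolding pQ0 pinv_simp by simp
  then have dQ0: "dg (ext k G) (Inr (pcls k G Q0)) = N" using ext_Inr(3)[OF rQ0] by simp
  have ppe: "\<not> ed p \<le> fst y" using py .
  have rD1: "rg (ext k G) (Inr D) = Inr (pcls k G (y, (p, p)))" using ext_Inr(1)[OF rD] py by simp
  have yPP: "snd y (P, P) = snd x (dn, dn)" using yPQ(3) xdnT(3) e1 by simp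
  have "pinv (y, (p, p)) = pinv (x, (n, n))"
    unfolding pinv_simp P_def[symmetric] dn_def[symmetric] yPP e2 by simp
  then have srC: "sr (ext k G) (Inr C) = rg (ext k G) (Inr D)"
    unfolding ext_Inr(2)[OF rC] rD1 using pcls_eq by metis
  have zm': "snd z (m', m') = sr G l" using zmR(3) f1 xlT(3) xml(4) lx by simp
  have srl: "sr (ext k G) (Inl l) = rg (ext k G) (Inr D')"
    unfolding ext_Inl ext_Inr(1)[OF rD'] using m'e zm' by simp
  have "(Inr D', Inr D) \<in> minext (ext k G) (Inl l) (Inr C)"
    unfolding minext_def using DP DP' srC srl c1 c2 dQ0
    by (simp add: ext_Mor ext_Inl ext_Inr(3)[OF rC] N_def)
  then show ?thesis using lE by blast
qed

end


theorem lemma3p27: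
  fixes k :: nat and G :: "'a cat_data" and v :: 'a and E :: "'a set"
  assumes "is_kgraph k G"
    and "finitely_aligned G"
    and "v \<in> verts G"
    and "E \<subseteq> {l \<in> Mor G. rg G l = v}"
    and "finite E"
    and "exhaustive G v E"
  shows "finite (Inl ` E) \<and> Inl ` E \<subseteq> {l \<in> Mor (ext k G). rg (ext k G) l = Inl v}
         \<and> exhaustive (ext k G) (Inl v) (Inl ` E)"
proof -
  interpret kgr k G using assms(1) by (simp add: kgr_def)
  have s1: "finite (Inl ` E)" using assms(5) by simp
  have s2: "Inl ` E \<subseteq> {l \<in> Mor (ext k G). rg (ext k G) l = Inl v}"
    using assms(4) by (auto simp: ext_Mor ext_Inl)
  have s3: "exhaustive (ext k G) (Inl v) (Inl ` E)"
    unfolding exhaustive_def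
  proof (intro ballI impI)
    fix u assume u: "u \<in> Mor (ext k G)" "rg (ext k G) u = Inl v"
    show "\<exists>l\<in>Inl ` E. minext (ext k G) l u \<noteq> {}"
    proof (cases u)
      case (Inl \<mu>)
      have mu: "\<mu> \<in> Mor G" "rg G \<mu> = v" using u Inl by (auto simp: ext_Mor ext_Inl)
      obtain l where lE: "l \<in> E" and mne: "minext G l \<mu> \<noteq> {}"
        using assms(6) mu unfolding exhaustive_def by blast
      obtain a b where ab: "(a, b) \<in> minext G l \<mu>" using mne by auto
      have "(Inl a, Inl b) \<in> minext (ext k G) (Inl l) (Inl \<mu>)"
        using ab unfolding minext_def by (auto simp: ext_Mor ext_Inl)
      then show ?thesis using lE Inl by blast
    next
      case (Inr C)
      have CP: "C \<in> Ptilde k G" using u Inr by (auto simp: ext_Mor)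
      obtain l where "l \<in> E" "minext (ext k G) (Inl l) (Inr C) \<noteq> {}"
        using inr_case[OF CP _ assms(3,4,5,6)] u Inr by blast
      then show ?thesis using Inr by blast
    qed
  qed
  show ?thesis using s1 s2 s3 by blast
qed


end
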